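(* Let $q\equiv 3 \pmod 4$ be a prime power and let $P=\{(x,y,z)\in\mathbb{F}_q^3 : z=x^2+y^2\}$. There is an absolute constant $c>0$ such that for any $\lambda,\beta\in\mathbb{F}_q^*$ there exists a set $X\subset P$ with $|X|\ge c\,q^{5/3}$ containing no non-trivial $(\lambda,\beta)$-energy tuple.
   Context: Every point of $P$ is written as $x=(\underline{x},\underline{x}\cdot\underline{x})$ with $\underline{x}\in\mathbb{F}_q^2$, where $u\cdot v=u_1v_1+u_2v_2$. Four points $x,z,y,t\in\mathbb{F}_q^2$ form a rectangle (with vertices in the cyclic order $x,z,y,t$) if $(x-z)\cdot(y-z)=0$, $(z-y)\cdot(t-y)=0$, $(y-t)\cdot(x-t)=0$ and $(t-x)\cdot(z-x)=0$; the length of a side $uv$ is $(u-v)\cdot(u-v)$. A tuple $(a,b,c,d)\in P^4$ is a non-trivial energy tuple if $a+b=c+d$ and $a,b,c,d$ are pairwise distinct; it is a $(\lambda,\beta)$-energy tuple if moreover $\underline{a},\underline{c},\underline{b},\underline{d}$ form a rectangle with side-lengths $\lambda$ and $\beta$. *)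

theory Defs
  imports Complex_Main "HOL-Algebra.Ring"
begin

text \<open>Elements of the finite field F_q are taken from a HOL-Algebra field R whose
carrier consists of natural numbers (every finite field is isomorphic to such one).
This is needed so that the absolute constant c can be quantified before the field.\<close>

type_synonym pt2 = "nat \<times> nat"
type_synonym pt3 = "nat \<times> nat \<times> nat"

definition dot2 :: "nat ring \<Rightarrow> pt2 \<Rightarrow> pt2 \<Rightarrow> nat" where
  "dot2 R u v = (fst u \<otimes>\<^bsub>R\<^esub> fst v) \<oplus>\<^bsub>R\<^esub> (snd u \<otimes>\<^bsub>R\<^esub> snd v)"

definition sub2 :: "nat ring \<Rightarrow> pt2 \<Rightarrow> pt2 \<Rightarrow> pt2" where
  "sub2 R u v = (fst u \<ominus>\<^bsub>R\<^esub> fst v, snd u \<ominus>\<^bsub>R\<^esub> snd v)"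

definition add3 :: "nat ring \<Rightarrow> pt3 \<Rightarrow> pt3 \<Rightarrow> pt3" where
  "add3 R a b = (fst a \<oplus>\<^bsub>R\<^esub> fst b, fst (snd a) \<oplus>\<^bsub>R\<^esub> fst (snd b),
                 snd (snd a) \<oplus>\<^bsub>R\<^esub> snd (snd b))"

definition parab :: "nat ring \<Rightarrow> pt3 set" where
  "parab R = {(x, y, z). x \<in> carrier R \<and> y \<in> carrier R \<and>
                z = (x \<otimes>\<^bsub>R\<^esub> x) \<oplus>\<^bsub>R\<^esub> (y \<otimes>\<^bsub>R\<^esub> y)}"

definition proj2 :: "pt3 \<Rightarrow> pt2" where
  "proj2 a = (fst a, fst (snd a))"

definition rectangle :: "nat ring \<Rightarrow> pt2 \<Rightarrow> pt2 \<Rightarrow> pt2 \<Rightarrow> pt2 \<Rightarrow> bool" where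
  "rectangle R x z y t \<longleftrightarrow>
     dot2 R (sub2 R x z) (sub2 R y z) = \<zero>\<^bsub>R\<^esub> \<and>
     dot2 R (sub2 R z y) (sub2 R t y) = \<zero>\<^bsub>R\<^esub> \<and>
     dot2 R (sub2 R y t) (sub2 R x t) = \<zero>\<^bsub>R\<^esub> \<and>
     dot2 R (sub2 R t x) (sub2 R z x) = \<zero>\<^bsub>R\<^esub>"

definition side_len :: "nat ring \<Rightarrow> pt2 \<Rightarrow> pt2 \<Rightarrow> nat" where
  "side_len R u v = dot2 R (sub2 R u v) (sub2 R u v)"

definition nontrivial_energy_tuple :: "nat ring \<Rightarrow> pt3 \<Rightarrow> pt3 \<Rightarrow> pt3 \<Rightarrow> pt3 \<Rightarrow> bool" where
  "nontrivial_energy_tuple R a b c d \<longleftrightarrow>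
     a \<in> parab R \<and> b \<in> parab R \<and> c \<in> parab R \<and> d \<in> parab R \<and>
     add3 R a b = add3 R c d \<and>
     a \<noteq> b \<and> a \<noteq> c \<and> a \<noteq> d \<and> b \<noteq> c \<and> b \<noteq> d \<and> c \<noteq> d"

definition lb_energy_tuple :: "nat ring \<Rightarrow> nat \<Rightarrow> nat \<Rightarrow> pt3 \<Rightarrow> pt3 \<Rightarrow> pt3 \<Rightarrow> pt3 \<Rightarrow> bool" where
  "lb_energy_tuple R l m a b c d \<longleftrightarrow>
     nontrivial_energy_tuple R a b c d \<and>
     rectangle R (proj2 a) (proj2 c) (proj2 b) (proj2 d) \<and>
     ((side_len R (proj2 a) (proj2 c) = l \<and> side_len R (proj2 c) (proj2 b) = m) \<or>
      (side_len R (proj2 a) (proj2 c) = m \<and> side_len R (proj2 c) (proj2 b) = l))"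

end

theory Submission
  imports Defs
begin
lemma choose4_real: "real (n choose 4) = real n * (real n - 1) * (real n - 2) * (real n - 3) / 24"
proof (cases "n < 4")
  case True
  then have "n = 0 \<or> n = 1 \<or> n = 2 \<or> n = 3" by auto
  then show ?thesis by (auto simp: numeral_eq_Suc)
next
  case False
  then obtain j where n: "n = j + 4" by (metis add.commute le_Suc_ex not_less)
  have "real (n choose 4) = (real n gchoose 4)" by (simp add: binomial_gbinomial)
  also have "\<dots> = real n * (real n - 1) * (real n - 2) * (real n - 3) / 24"
    by (simp add: gbinomial_prod_rev numeral_eq_Suc fact_numeral prod.atLeast0_lessThan_Suc algebra_simps)
  finally show ?thesis .
qed

lemma ratio4: assumes "k \<le> N"
  shows "real (k choose 4) * real N ^ 4 \<le> real (N choose 4) * real k ^ 4"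
proof (cases "k < 4")
  case True then show ?thesis by (simp add: binomial_eq_0)
next
  case False
  let ?k = "real k" and ?N = "real N"
  have kN: "?k \<le> ?N" using assms by simp
  have k4: "?k \<ge> 4" using False by simp
  have f: "(?k - i) * ?N \<le> (?N - i) * ?k" if "i \<ge> 0" for i :: real
    using kN that by (simp add: algebra_simps mult_left_mono)
  have "?k * (?k - 1) * (?k - 2) * (?k - 3) * ?N ^ 4 = ((?k - 0) * ?N) * ((?k - 1) * ?N) * ((?k - 2) * ?N) * ((?k - 3) * ?N)"
    by (simp add: power4_eq_xxxx algebra_simps)
  also have "\<dots> \<le> ((?N - 0) * ?k) * ((?N - 1) * ?k) * ((?N - 2) * ?k) * ((?N - 3) * ?k)"
    using k4 kN by (intro mult_mono f) auto
  also have "\<dots> = ?N * (?N - 1) * (?N - 2) * (?N - 3) * ?k ^ 4"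
    by (simp add: power4_eq_xxxx algebra_simps)
  finally show ?thesis by (simp add: choose4_real)
qed

lemma supersets_card:
  assumes fin: "finite V" and e: "e \<subseteq> V" "card e = 4"
  shows "card {Y. Y \<subseteq> V \<and> card Y = k \<and> e \<subseteq> Y} * (card V choose 4) = (k choose 4) * (card V choose k)"
proof (cases "k < 4")
  case True
  have E0: "{Y. Y \<subseteq> V \<and> card Y = k \<and> e \<subseteq> Y} = {}"
  proof (rule ccontr)
    assume "{Y. Y \<subseteq> V \<and> card Y = k \<and> e \<subseteq> Y} \<noteq> {}"
    then obtain Y where "Y \<subseteq> V" "card Y = k" "e \<subseteq> Y" by blast
    then have "card e \<le> k" using card_mono fin finite_subset by metis
    then show False using True e by simp
  qed
  show ?thesis by (simp only: E0 card.empty) (simp add: binomial_eq_0 True)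
next
  case False
  have fe: "finite e" using e fin finite_subset by blast
  have "bij_betw (\<lambda>Y. Y - e) {Y. Y \<subseteq> V \<and> card Y = k \<and> e \<subseteq> Y} {Z. Z \<subseteq> V - e \<and> card Z = k - 4}"
  proof (rule bij_betw_byWitness[where f' = "\<lambda>Z. Z \<union> e"], goal_cases)
    case 1 show ?case by auto
  next
    case 2 show ?case by auto
  next
    case 3 show ?case
    proof (rule image_subsetI)
      fix Y assume "Y \<in> {Y. Y \<subseteq> V \<and> card Y = k \<and> e \<subseteq> Y}"
      then have "Y \<subseteq> V" "card Y = k" "e \<subseteq> Y" by auto
      then show "Y - e \<in> {Z. Z \<subseteq> V - e \<and> card Z = k - 4}"
        using e fe by (auto simp: card_Diff_subset)
    qed
  next
    case 4 show ?case
    proof (rule image_subsetI)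
      fix Z assume "Z \<in> {Z. Z \<subseteq> V - e \<and> card Z = k - 4}"
      then have Z: "Z \<subseteq> V - e" "card Z = k - 4" by auto
      then have "finite Z" using fin finite_subset by blast
      moreover have "Z \<inter> e = {}" using Z by auto
      ultimately have "card (Z \<union> e) = k" using card_Un_disjoint[of Z e] fe Z e False by simp
      then show "Z \<union> e \<in> {Y. Y \<subseteq> V \<and> card Y = k \<and> e \<subseteq> Y}" using Z e by auto
    qed
  qed
  then have "card {Y. Y \<subseteq> V \<and> card Y = k \<and> e \<subseteq> Y} = card {Z. Z \<subseteq> V - e \<and> card Z = k - 4}"
    by (rule bij_betw_same_card)
  also have "\<dots> = card (V - e) choose (k - 4)" using fin by (simp add: n_subsets)
  also have "\<dots> = (card V - 4) choose (k - 4)" using e fe fin by (simp add: card_Diff_subset)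
  finally have c: "card {Y. Y \<subseteq> V \<and> card Y = k \<and> e \<subseteq> Y} = (card V - 4) choose (k - 4)" .
  show ?thesis
  proof (cases "k \<le> card V")
    case True
    then show ?thesis using c choose_mult[of 4 k "card V"] False by (simp add: mult.commute)
  next
    case nk: False
    have "card e \<le> card V" using e fin card_mono by metis
    then have "card V - 4 < k - 4" using False nk e by arith
    then show ?thesis using c nk by (simp add: binomial_eq_0)
  qed
qed


lemma deletion:
  fixes V :: "'a set" and E :: "'a set set"
  assumes fin: "finite V" and E: "\<And>e. e \<in> E \<Longrightarrow> e \<subseteq> V \<and> card e = 4" and kN: "k \<le> card V"
  shows "\<exists>X \<subseteq> V. real (card X) \<ge> real k - real (card E) * (real k / real (card V)) ^ 4 \<and> (\<forall>e\<in>E. \<not> e \<subseteq> X)"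
proof (cases "E = {}")
  case True
  then show ?thesis using kN by (intro exI[of _ V]) auto
next
  case False
  let ?N = "card V"
  from False obtain e0 where "e0 \<in> E" by blast
  then have "card e0 \<le> ?N" using E[of e0] card_mono fin by metis
  then have N4: "?N \<ge> 4" using E \<open>e0 \<in> E\<close> by simp
  have finE: "finite E" using E fin by (meson Pow_iff finite_Pow_iff finite_subset subsetI)
  define Fam where "Fam = {Y. Y \<subseteq> V \<and> card Y = k}"
  have finF: "finite Fam" using fin by (simp add: Fam_def)
  have cF: "card Fam = ?N choose k" using fin by (simp add: Fam_def n_subsets)
  have cF0: "card Fam > 0" using cF kN by simp
  define cnt where "cnt Y = card {e \<in> E. e \<subseteq> Y}" for Y
  have "(\<Sum>Y\<in>Fam. cnt Y) = (\<Sum>Y\<in>Fam. \<Sum>e\<in>E. if e \<subseteq> Y then 1 else 0)"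
    using finE by (intro sum.cong refl) (simp add: cnt_def sum.If_cases Int_def)
  also have "\<dots> = (\<Sum>e\<in>E. \<Sum>Y\<in>Fam. if e \<subseteq> Y then 1 else 0)" by (rule sum.swap)
  also have "\<dots> = (\<Sum>e\<in>E. card {Y. Y \<subseteq> V \<and> card Y = k \<and> e \<subseteq> Y})"
    using finF by (intro sum.cong refl) (simp add: sum.If_cases Int_def Fam_def conj_assoc)
  finally have sumeq: "(\<Sum>Y\<in>Fam. cnt Y) * (?N choose 4) = card E * ((k choose 4) * (?N choose k))"
    using supersets_card[OF fin] E by (simp add: sum_distrib_right)
  have "\<exists>Y\<in>Fam. cnt Y * (?N choose 4) \<le> card E * (k choose 4)"
  proof (rule ccontr)
    assume "\<not> ?thesis"
    then have "\<forall>Y\<in>Fam. card E * (k choose 4) < cnt Y * (?N choose 4)" by auto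
    then have "(\<Sum>Y\<in>Fam. card E * (k choose 4)) < (\<Sum>Y\<in>Fam. cnt Y * (?N choose 4))"
      using finF cF0 by (intro sum_strict_mono) auto
    then show False using sumeq cF by (simp add: sum_distrib_right mult_ac)
  qed
  then obtain Y where Y: "Y \<in> Fam" and cY: "cnt Y * (?N choose 4) \<le> card E * (k choose 4)" by blast
  have N4p: "real (?N choose 4) > 0" using N4 by simp
  have "real (cnt Y) * real (?N choose 4) \<le> real (card E) * real (k choose 4)"
    using cY by (metis of_nat_le_iff of_nat_mult)
  then have "real (cnt Y) * real (?N choose 4) * real ?N ^ 4 \<le> real (card E) * (real (k choose 4) * real ?N ^ 4)"
    using mult_right_mono[OF _ zero_le_power[of "real ?N" 4]] by (metis mult.assoc of_nat_0_le_iff)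
  also have "\<dots> \<le> real (card E) * (real (?N choose 4) * real k ^ 4)"
    using ratio4[OF kN] by (simp add: mult_left_mono)
  finally have "real (cnt Y) * real ?N ^ 4 \<le> real (card E) * real k ^ 4"
    using N4p by (simp add: mult_ac)
  then have cntb: "real (cnt Y) \<le> real (card E) * (real k / real ?N) ^ 4"
    using N4 by (simp add: field_simps power_divide)
  define I where "I = (\<lambda>e. SOME x. x \<in> e) ` {e \<in> E. e \<subseteq> Y}"
  define X where "X = Y - I"
  have finY: "finite Y" using Y fin by (auto simp: Fam_def finite_subset)
  have "card I \<le> cnt Y" unfolding I_def cnt_def using finE by (intro card_image_le) auto
  moreover have "card Y \<le> card X + card I"
  proof -
    have finI: "finite I" unfolding I_def using finE by auto
    have "Y \<subseteq> X \<union> I" by (auto simp: X_def)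
    then have "card Y \<le> card (X \<union> I)" using finY finI by (intro card_mono) (auto simp: X_def)
    also have "\<dots> \<le> card X + card I" by (rule card_Un_le)
    finally show ?thesis .
  qed
  ultimately have "real (card X) \<ge> real k - real (cnt Y)" using Y by (simp add: Fam_def)
  moreover have "X \<subseteq> V" using Y by (auto simp: X_def Fam_def)
  moreover have "\<forall>e\<in>E. \<not> e \<subseteq> X"
  proof (intro ballI notI)
    fix e assume e: "e \<in> E" and eX: "e \<subseteq> X"
    then have "e \<subseteq> Y" by (auto simp: X_def)
    then have "(SOME x. x \<in> e) \<in> I" using e by (auto simp: I_def)
    moreover have "e \<noteq> {}" using E[OF e] by auto
    then have "(SOME x. x \<in> e) \<in> e" by (simp add: some_in_eq)
    ultimately show False using eX by (auto simp: X_def)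
  qed
  ultimately show ?thesis using cntb by (intro exI[of _ X]) auto
qed

lemma real_bound:
  fixes q :: nat assumes q3: "q \<ge> 3"
  defines "y \<equiv> real q powr (5/3)"
  defines "k \<equiv> nat \<lfloor>y / 4\<rfloor>"
  shows "real k \<le> real q ^ 2" and "64 * real k ^ 3 \<le> real q ^ 5" and "real k \<ge> y / 8"
proof -
  have qp: "real q > 0" using q3 by simp
  have y3: "y ^ 3 = real q ^ 5"
  proof -
    have "y ^ 3 = real q powr (of_nat 3 * (5/3))" unfolding y_def using qp by (intro powr_power) simp
    also have "\<dots> = real q powr (real 5)" by simp
    also have "\<dots> = real q ^ 5" using qp by (rule powr_realpow)
    finally show ?thesis .
  qed
  have y0: "y > 0" unfolding y_def using qp by simp
  have y4: "y \<ge> 4"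
  proof (rule ccontr)
    assume "\<not> y \<ge> 4"
    then have "y ^ 3 < 4 ^ 3" using y0 by (intro power_strict_mono) auto
    moreover have "real q ^ 5 \<ge> 3 ^ 5" using q3 by (intro power_mono) auto
    ultimately show False using y3 by simp
  qed
  have kf: "real k = real_of_int \<lfloor>y / 4\<rfloor>" unfolding k_def using y0 by simp
  have ky: "real k \<le> y / 4" using kf of_int_floor_le[of "y/4"] by linarith
  have "y \<le> real q powr 2" unfolding y_def using q3 by (intro powr_mono) auto
  moreover have "real q powr (real 2) = real q ^ 2" using qp by (rule powr_realpow)
  ultimately have "y \<le> real q ^ 2" by simp
  then show "real k \<le> real q ^ 2" using ky y0 by linarith
  have "real k ^ 3 \<le> (y / 4) ^ 3" using ky by (intro power_mono) auto
  then show "64 * real k ^ 3 \<le> real q ^ 5" using y3 by (simp add: power_divide)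
  show "real k \<ge> y / 8"
  proof (cases "y / 4 < 2")
    case True
    have "\<lfloor>y / 4\<rfloor> \<ge> 1" using y4 by simp
    then have "real k \<ge> 1" unfolding k_def by linarith
    then show ?thesis using True by linarith
  next
    case False
    have "real_of_int \<lfloor>y / 4\<rfloor> > y / 4 - 1" by linarith
    moreover have "real k = real_of_int \<lfloor>y / 4\<rfloor>" unfolding k_def using y0 by simp
    ultimately show ?thesis using False by linarith
  qed
qed

context field begin
lemma diff0_eq: "x \<in> carrier R \<Longrightarrow> y \<in> carrier R \<Longrightarrow> x \<ominus> y = \<zero> \<Longrightarrow> x = y"
proof -
  assume R: "x \<in> carrier R" "y \<in> carrier R" and h: "x \<ominus> y = \<zero>"
  from R have "x = x \<ominus> (x \<ominus> y) \<oplus> (x \<ominus> y)" by algebra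
  also have "\<dots> = x \<ominus> (x \<ominus> y)" using h R by simp
  also from R have "\<dots> = y" by algebra
  finally show ?thesis .
qed
lemma sq_eq_cases: assumes R: "x \<in> carrier R" "y \<in> carrier R" and h: "x \<otimes> x = y \<otimes> y"
  shows "x = y \<or> x = \<ominus> y"
proof -
  from R have "(x \<ominus> y) \<otimes> (x \<oplus> y) = x \<otimes> x \<ominus> y \<otimes> y" by algebra
  also have "\<dots> = \<zero>" using h R by algebra
  finally have "x \<ominus> y = \<zero> \<or> x \<oplus> y = \<zero>" using R integral by blast
  then show ?thesis
  proof
    assume "x \<ominus> y = \<zero>" then show ?thesis using diff0_eq R by blast
  next
    assume "x \<oplus> y = \<zero>" then have "x \<ominus> (\<ominus> y) = \<zero>" using R by algebra
    then show ?thesis using diff0_eq R by blast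
  qed
qed
lemma sqset_card: assumes "r \<in> carrier R"
  shows "finite {x \<in> carrier R. x \<otimes> x = r} \<and> card {x \<in> carrier R. x \<otimes> x = r} \<le> 2"
proof (cases "{x \<in> carrier R. x \<otimes> x = r} = {}")
  case True then show ?thesis by (simp only: True) simp
next
  case False
  then obtain y where y: "y \<in> carrier R" "y \<otimes> y = r" by blast
  have "{x \<in> carrier R. x \<otimes> x = r} \<subseteq> {y, \<ominus> y}" using sq_eq_cases y by auto
  moreover have "card {y, \<ominus> y} \<le> 2" by (simp add: card_insert_le_m1)
  ultimately show ?thesis by (meson card_mono finite.emptyI finite.insertI order_trans rev_finite_subset)
qed
lemma inj_sq_le2: assumes "r \<in> carrier R" "inj_on f S" "\<And>s. s \<in> S \<Longrightarrow> f s \<in> carrier R \<and> f s \<otimes> f s = r"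
  shows "card S \<le> 2"
proof -
  have "f ` S \<subseteq> {x \<in> carrier R. x \<otimes> x = r}" using assms(3) by auto
  then have "card (f ` S) \<le> 2" using sqset_card[OF assms(1)] by (meson card_mono order_trans)
  then show ?thesis using card_image[OF assms(2)] by simp
qed
end

locale nfield = field R for R :: "nat ring" (structure)
context nfield begin
lemma parab_iff: "a \<in> parab R \<longleftrightarrow> fst a \<in> carrier R \<and> fst (snd a) \<in> carrier R \<and>
   snd (snd a) = (fst a \<otimes> fst a) \<oplus> (fst (snd a) \<otimes> fst (snd a))"
  by (cases a) (auto simp: parab_def)
lemma parab_eqI: "a \<in> parab R \<Longrightarrow> b \<in> parab R \<Longrightarrow> fst a = fst b \<Longrightarrow> fst (snd a) = fst (snd b) \<Longrightarrow> a = b"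
  by (simp add: parab_iff prod_eq_iff)
lemma cancel_r: "x \<in> carrier R \<Longrightarrow> y \<in> carrier R \<Longrightarrow> c \<in> carrier R \<Longrightarrow> x \<ominus> c = y \<ominus> c \<Longrightarrow> x = y"
proof -
  assume R: "x \<in> carrier R" "y \<in> carrier R" "c \<in> carrier R" and h: "x \<ominus> c = y \<ominus> c"
  have "x = (x \<ominus> c) \<oplus> c" using R by algebra
  also have "\<dots> = (y \<ominus> c) \<oplus> c" using h by simp
  also have "\<dots> = y" using R by algebra
  finally show ?thesis .
qed

lemma eq_sub: "u \<in> carrier R \<Longrightarrow> w \<in> carrier R \<Longrightarrow> u \<oplus> w = k \<Longrightarrow> w = k \<ominus> u"
proof -
  assume R: "u \<in> carrier R" "w \<in> carrier R" and h: "u \<oplus> w = k"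
  have "w = (u \<oplus> w) \<ominus> u" using R by algebra
  then show ?thesis using h by simp
qed

lemma A_count:
  assumes fin: "finite (carrier R)" and R: "c1 \<in> carrier R" "c2 \<in> carrier R" "k \<in> carrier R"
  shows "card {a \<in> parab R. side_len R (proj2 a) (c1, c2) = k} \<le> 2 * card (carrier R)"
proof -
  let ?S = "\<lambda>x. {a \<in> parab R. fst a = x \<and> side_len R (proj2 a) (c1, c2) = k}"
  have eq: "{a \<in> parab R. side_len R (proj2 a) (c1, c2) = k} = (\<Union>x\<in>carrier R. ?S x)"
    by (auto simp: parab_iff)
  have each: "card (?S x) \<le> 2" if x: "x \<in> carrier R" for x
  proof (rule inj_sq_le2[where f = "\<lambda>a. fst (snd a) \<ominus> c2" and r = "k \<ominus> (x \<ominus> c1) \<otimes> (x \<ominus> c1)"])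
    show "k \<ominus> (x \<ominus> c1) \<otimes> (x \<ominus> c1) \<in> carrier R" using R x by simp
    show "inj_on (\<lambda>a. fst (snd a) \<ominus> c2) (?S x)"
    proof (rule inj_onI)
      fix a b assume a: "a \<in> ?S x" and b: "b \<in> ?S x" and e: "fst (snd a) \<ominus> c2 = fst (snd b) \<ominus> c2"
      have "fst (snd a) = fst (snd b)" using cancel_r[OF _ _ R(2) e] a b by (simp add: parab_iff)
      then show "a = b" using a b parab_eqI by auto
    qed
    fix a assume a: "a \<in> ?S x"
    then have ac: "fst (snd a) \<in> carrier R" and a1: "fst a = x" by (auto simp: parab_iff)
    have "side_len R (proj2 a) (c1, c2) = k" using a by simp
    then have "(x \<ominus> c1) \<otimes> (x \<ominus> c1) \<oplus> (fst (snd a) \<ominus> c2) \<otimes> (fst (snd a) \<ominus> c2) = k"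
      by (simp add: side_len_def dot2_def sub2_def proj2_def a1)
    then show "fst (snd a) \<ominus> c2 \<in> carrier R \<and> (fst (snd a) \<ominus> c2) \<otimes> (fst (snd a) \<ominus> c2) = k \<ominus> (x \<ominus> c1) \<otimes> (x \<ominus> c1)"
      using R x ac eq_sub by simp
  qed
  have "card (\<Union>x\<in>carrier R. ?S x) \<le> (\<Sum>x\<in>carrier R. card (?S x))" by (rule card_UN_le[OF fin])
  also have "\<dots> \<le> (\<Sum>x\<in>carrier R. 2)" by (rule sum_mono) (rule each)
  finally show ?thesis using eq by simp
qed
end

context nfield begin
lemma lagr: assumes R: "u1 \<in> carrier R" "u2 \<in> carrier R" "v1 \<in> carrier R" "v2 \<in> carrier R"
  and D: "u1 \<otimes> v1 \<oplus> u2 \<otimes> v2 = \<zero>"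
  shows "(v2 \<otimes> u1 \<ominus> v1 \<otimes> u2) \<otimes> (v2 \<otimes> u1 \<ominus> v1 \<otimes> u2) = (u1 \<otimes> u1 \<oplus> u2 \<otimes> u2) \<otimes> (v1 \<otimes> v1 \<oplus> v2 \<otimes> v2)"
    and "v1 \<otimes> (u1 \<otimes> u1 \<oplus> u2 \<otimes> u2) = \<ominus> ((v2 \<otimes> u1 \<ominus> v1 \<otimes> u2) \<otimes> u2)"
    and "v2 \<otimes> (u1 \<otimes> u1 \<oplus> u2 \<otimes> u2) = (v2 \<otimes> u1 \<ominus> v1 \<otimes> u2) \<otimes> u1"
proof -
  have "(v2 \<otimes> u1 \<ominus> v1 \<otimes> u2) \<otimes> (v2 \<otimes> u1 \<ominus> v1 \<otimes> u2) \<oplus> (u1 \<otimes> v1 \<oplus> u2 \<otimes> v2) \<otimes> (u1 \<otimes> v1 \<oplus> u2 \<otimes> v2)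
      = (u1 \<otimes> u1 \<oplus> u2 \<otimes> u2) \<otimes> (v1 \<otimes> v1 \<oplus> v2 \<otimes> v2)" using R by algebra
  then show "(v2 \<otimes> u1 \<ominus> v1 \<otimes> u2) \<otimes> (v2 \<otimes> u1 \<ominus> v1 \<otimes> u2) = (u1 \<otimes> u1 \<oplus> u2 \<otimes> u2) \<otimes> (v1 \<otimes> v1 \<oplus> v2 \<otimes> v2)"
    using D R by simp
  have "v1 \<otimes> (u1 \<otimes> u1 \<oplus> u2 \<otimes> u2) = (u1 \<otimes> v1 \<oplus> u2 \<otimes> v2) \<otimes> u1 \<ominus> ((v2 \<otimes> u1 \<ominus> v1 \<otimes> u2) \<otimes> u2)"
    using R by algebra
  then show "v1 \<otimes> (u1 \<otimes> u1 \<oplus> u2 \<otimes> u2) = \<ominus> ((v2 \<otimes> u1 \<ominus> v1 \<otimes> u2) \<otimes> u2)"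
    using D R by (simp add: minus_eq)
  have "v2 \<otimes> (u1 \<otimes> u1 \<oplus> u2 \<otimes> u2) = (u1 \<otimes> v1 \<oplus> u2 \<otimes> v2) \<otimes> u2 \<oplus> ((v2 \<otimes> u1 \<ominus> v1 \<otimes> u2) \<otimes> u1)"
    using R by algebra
  then show "v2 \<otimes> (u1 \<otimes> u1 \<oplus> u2 \<otimes> u2) = (v2 \<otimes> u1 \<ominus> v1 \<otimes> u2) \<otimes> u1"
    using D R by simp
qed

lemma B_count:
  assumes R: "u1 \<in> carrier R" "u2 \<in> carrier R" "c1 \<in> carrier R" "c2 \<in> carrier R" "k \<in> carrier R"
    and L: "u1 \<otimes> u1 \<oplus> u2 \<otimes> u2 \<noteq> \<zero>"
  shows "card {b \<in> parab R. dot2 R (u1, u2) (sub2 R (proj2 b) (c1, c2)) = \<zero> \<and> side_len R (c1, c2) (proj2 b) = k} \<le> 2"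
proof -
  let ?L = "u1 \<otimes> u1 \<oplus> u2 \<otimes> u2"
  let ?S = "{b \<in> parab R. dot2 R (u1, u2) (sub2 R (proj2 b) (c1, c2)) = \<zero> \<and> side_len R (c1, c2) (proj2 b) = k}"
  let ?f = "\<lambda>b. (fst (snd b) \<ominus> c2) \<otimes> u1 \<ominus> (fst b \<ominus> c1) \<otimes> u2"
  have key: "fst b \<in> carrier R \<and> fst (snd b) \<in> carrier R \<and>
      (fst b \<ominus> c1) \<otimes> ?L = \<ominus> (?f b \<otimes> u2) \<and> (fst (snd b) \<ominus> c2) \<otimes> ?L = ?f b \<otimes> u1 \<and>
      ?f b \<otimes> ?f b = ?L \<otimes> k" if b: "b \<in> ?S" for b
  proof -
    have b1: "fst b \<in> carrier R" and b2: "fst (snd b) \<in> carrier R" using b by (auto simp: parab_iff)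
    have D: "u1 \<otimes> (fst b \<ominus> c1) \<oplus> u2 \<otimes> (fst (snd b) \<ominus> c2) = \<zero>"
      using b by (simp add: dot2_def sub2_def proj2_def)
    have "(c1 \<ominus> fst b) \<otimes> (c1 \<ominus> fst b) \<oplus> (c2 \<ominus> fst (snd b)) \<otimes> (c2 \<ominus> fst (snd b)) = k"
      using b by (simp add: side_len_def dot2_def sub2_def proj2_def)
    moreover have "(c1 \<ominus> fst b) \<otimes> (c1 \<ominus> fst b) \<oplus> (c2 \<ominus> fst (snd b)) \<otimes> (c2 \<ominus> fst (snd b)) =
       (fst b \<ominus> c1) \<otimes> (fst b \<ominus> c1) \<oplus> (fst (snd b) \<ominus> c2) \<otimes> (fst (snd b) \<ominus> c2)"
      using R b1 b2 by algebra
    ultimately have V: "(fst b \<ominus> c1) \<otimes> (fst b \<ominus> c1) \<oplus> (fst (snd b) \<ominus> c2) \<otimes> (fst (snd b) \<ominus> c2) = k" by simp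
    note l = lagr[OF R(1,2) _ _ D]
    show ?thesis using l V b1 b2 R by simp
  qed
  show ?thesis
  proof (rule inj_sq_le2[where f = ?f and r = "?L \<otimes> k"])
    show "?L \<otimes> k \<in> carrier R" using R by simp
    show "inj_on ?f ?S"
    proof (rule inj_onI)
      fix a b assume a: "a \<in> ?S" and b: "b \<in> ?S" and e: "?f a = ?f b"
      have Lc: "?L \<in> carrier R" using R by simp
      have "(fst a \<ominus> c1) \<otimes> ?L = (fst b \<ominus> c1) \<otimes> ?L" using key[OF a] key[OF b] e by simp
      moreover have "fst a \<ominus> c1 \<in> carrier R" "fst b \<ominus> c1 \<in> carrier R" using key[OF a] key[OF b] R by auto
      ultimately have "fst a \<ominus> c1 = fst b \<ominus> c1" using m_rcancel[OF L Lc] by blast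
      then have 1: "fst a = fst b" using cancel_r key[OF a] key[OF b] R by blast
      have "(fst (snd a) \<ominus> c2) \<otimes> ?L = (fst (snd b) \<ominus> c2) \<otimes> ?L" using key[OF a] key[OF b] e by simp
      moreover have "fst (snd a) \<ominus> c2 \<in> carrier R" "fst (snd b) \<ominus> c2 \<in> carrier R" using key[OF a] key[OF b] R by auto
      ultimately have "fst (snd a) \<ominus> c2 = fst (snd b) \<ominus> c2" using m_rcancel[OF L Lc] by blast
      then have 2: "fst (snd a) = fst (snd b)" using cancel_r key[OF a] key[OF b] R by blast
      show "a = b" using parab_eqI 1 2 a b by auto
    qed
    fix b assume "b \<in> ?S"
    then show "?f b \<in> carrier R \<and> ?f b \<otimes> ?f b = ?L \<otimes> k" using key R by simp
  qed
qed
end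

context nfield begin

lemma add_lcancel: "x \<in> carrier R \<Longrightarrow> y \<in> carrier R \<Longrightarrow> z \<in> carrier R \<Longrightarrow> x \<oplus> y = x \<oplus> z \<Longrightarrow> y = z"
  using eq_sub by metis

lemma finite_parab: assumes "finite (carrier R)" shows "finite (parab R)"
proof -
  have "parab R \<subseteq> (\<lambda>(x,y). (x, y, x \<otimes> x \<oplus> y \<otimes> y)) ` (carrier R \<times> carrier R)"
    by (auto simp: parab_def)
  then show ?thesis using assms by (meson finite_SigmaI finite_imageI finite_subset)
qed

lemma card_parab: assumes "finite (carrier R)" shows "card (parab R) = card (carrier R) * card (carrier R)"
proof -
  have "parab R = (\<lambda>(x,y). (x, y, x \<otimes> x \<oplus> y \<otimes> y)) ` (carrier R \<times> carrier R)"
    by (auto simp: parab_def)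
  moreover have "inj_on (\<lambda>(x,y). (x, y, x \<otimes> x \<oplus> y \<otimes> y)) (carrier R \<times> carrier R)"
    by (auto simp: inj_on_def)
  ultimately show ?thesis by (simp add: card_image card_cartesian_product)
qed

definition T4 :: "nat \<Rightarrow> nat \<Rightarrow> (pt3 \<times> pt3 \<times> pt3 \<times> pt3) set" where
  "T4 l m = {(a,b,c,d). lb_energy_tuple R l m a b c d}"

lemma T4_sub: "T4 l m \<subseteq> parab R \<times> parab R \<times> parab R \<times> parab R"
  by (auto simp: T4_def lb_energy_tuple_def nontrivial_energy_tuple_def)

lemma card_T4:
  assumes fin: "finite (carrier R)" and l: "l \<in> carrier R - {\<zero>}" and m: "m \<in> carrier R - {\<zero>}"
  shows "card (T4 l m) \<le> 16 * card (carrier R) ^ 3"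
proof -
  let ?P = "parab R"
  let ?q = "card (carrier R)"
  have finP: "finite ?P" using finite_parab fin .
  define A where "A c = {a \<in> ?P. side_len R (proj2 a) (proj2 c) \<in> {l, m}}" for c
  define B where "B c a = {b \<in> ?P. dot2 R (sub2 R (proj2 a) (proj2 c)) (sub2 R (proj2 b) (proj2 c)) = \<zero>
       \<and> side_len R (proj2 c) (proj2 b) \<in> {l, m}}" for c a
  have cA: "card (A c) \<le> 4 * ?q" if c: "c \<in> ?P" for c
  proof -
    define S1 where "S1 = {a \<in> ?P. side_len R (proj2 a) (fst c, fst (snd c)) = l}"
    define S2 where "S2 = {a \<in> ?P. side_len R (proj2 a) (fst c, fst (snd c)) = m}"
    have eqA: "A c = S1 \<union> S2"
      by (auto simp: A_def proj2_def S1_def S2_def)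
    have c1: "card S1 \<le> 2 * ?q" unfolding S1_def
      by (rule A_count) (use fin c l in \<open>auto simp: parab_iff\<close>)
    have c2: "card S2 \<le> 2 * ?q" unfolding S2_def
      by (rule A_count) (use fin c m in \<open>auto simp: parab_iff\<close>)
    have "card (A c) \<le> card S1 + card S2" unfolding eqA by (rule card_Un_le)
    then have "card (A c) \<le> 2 * ?q + 2 * ?q" using c1 c2 by linarith
    then show ?thesis by simp
  qed
  have cB: "card (B c a) \<le> 4" if c: "c \<in> ?P" and a: "a \<in> A c" for c a
  proof -
    let ?u1 = "fst a \<ominus> fst c" and ?u2 = "fst (snd a) \<ominus> fst (snd c)"
    have cc: "fst c \<in> carrier R" "fst (snd c) \<in> carrier R" using c by (auto simp: parab_iff)
    have ac: "fst a \<in> carrier R" "fst (snd a) \<in> carrier R" using a by (auto simp: A_def parab_iff)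
    have "side_len R (proj2 a) (proj2 c) \<in> {l, m}" using a by (simp add: A_def)
    then have L: "?u1 \<otimes> ?u1 \<oplus> ?u2 \<otimes> ?u2 \<noteq> \<zero>" using l m by (auto simp: side_len_def dot2_def sub2_def proj2_def)
    define S1 where "S1 = {b \<in> ?P. dot2 R (?u1, ?u2) (sub2 R (proj2 b) (fst c, fst (snd c))) = \<zero> \<and> side_len R (fst c, fst (snd c)) (proj2 b) = l}"
    define S2 where "S2 = {b \<in> ?P. dot2 R (?u1, ?u2) (sub2 R (proj2 b) (fst c, fst (snd c))) = \<zero> \<and> side_len R (fst c, fst (snd c)) (proj2 b) = m}"
    have eqB: "B c a = S1 \<union> S2"
      by (auto simp: B_def proj2_def sub2_def S1_def S2_def)
    have c1: "card S1 \<le> 2" unfolding S1_def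
      by (rule B_count) (use cc ac l L in auto)
    have c2: "card S2 \<le> 2" unfolding S2_def
      by (rule B_count) (use cc ac m L in auto)
    have "card (B c a) \<le> card S1 + card S2" unfolding eqB by (rule card_Un_le)
    then have "card (B c a) \<le> 2 + 2" using c1 c2 by linarith
    then show ?thesis by simp
  qed
  let ?Sig = "SIGMA c:?P. SIGMA a:A c. B c a"
  have finA: "finite (A c)" for c using finP by (simp add: A_def)
  have finB: "finite (B c a)" for c a using finP by (simp add: B_def)
  have "card ?Sig = (\<Sum>c\<in>?P. \<Sum>a\<in>A c. card (B c a))"
    using finP finA finB by (simp add: finite_SigmaI)
  also have "\<dots> \<le> (\<Sum>c\<in>?P. \<Sum>a\<in>A c. 4)" by (intro sum_mono cB) auto
  also have "\<dots> = (\<Sum>c\<in>?P. 4 * card (A c))" by (simp add: mult.commute)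
  also have "\<dots> \<le> (\<Sum>c\<in>?P. 16 * ?q)" by (rule sum_mono) (use cA in force)
  also have "\<dots> = 16 * ?q ^ 3" using card_parab[OF fin] by (simp add: power3_eq_cube)
  finally have cSig: "card ?Sig \<le> 16 * ?q ^ 3" .
  let ?g = "\<lambda>(a::pt3, b::pt3, c::pt3, d::pt3). (c, a, b)"
  have inj: "inj_on ?g (T4 l m)"
  proof (rule inj_onI)
    fix x y assume x: "x \<in> T4 l m" and y: "y \<in> T4 l m" and e0: "?g x = ?g y"
    obtain a b c d where xd: "x = (a, b, c, d)" by (cases x) auto
    obtain a' b' c' d' where yd: "y = (a', b', c', d')" by (cases y) auto
    have t: "(a, b, c, d) \<in> T4 l m" and t': "(a', b', c', d') \<in> T4 l m" using x y xd yd by auto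
    have ee: "a' = a" "b' = b" "c' = c" using e0 xd yd by auto
    have n: "nontrivial_energy_tuple R a b c d" "nontrivial_energy_tuple R a b c d'"
      using t t' ee by (auto simp: T4_def lb_energy_tuple_def)
    have P: "a \<in> ?P" "b \<in> ?P" "c \<in> ?P" "d \<in> ?P" "d' \<in> ?P" using n by (auto simp: nontrivial_energy_tuple_def)
    have s: "add3 R c d = add3 R c d'" using n by (simp add: nontrivial_energy_tuple_def)
    have "fst d = fst d'" using s P add_lcancel[of "fst c" "fst d" "fst d'"] by (simp add: add3_def parab_iff)
    moreover have "fst (snd d) = fst (snd d')" using s P add_lcancel[of "fst (snd c)" "fst (snd d)" "fst (snd d')"]
      by (simp add: add3_def parab_iff)
    ultimately have "d = d'" using parab_eqI P by auto
    then show "x = y" using ee xd yd by simp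
  qed
  have "?g ` T4 l m \<subseteq> ?Sig"
  proof (rule image_subsetI)
    fix x assume x: "x \<in> T4 l m"
    obtain a b c d where xd: "x = (a, b, c, d)" by (cases x) auto
    have lb: "lb_energy_tuple R l m a b c d" using x xd by (simp add: T4_def)
    then have P: "a \<in> ?P" "b \<in> ?P" "c \<in> ?P" by (auto simp: lb_energy_tuple_def nontrivial_energy_tuple_def)
    from lb have "side_len R (proj2 a) (proj2 c) \<in> {l, m}" "side_len R (proj2 c) (proj2 b) \<in> {l, m}"
      by (auto simp: lb_energy_tuple_def)
    moreover from lb have "dot2 R (sub2 R (proj2 a) (proj2 c)) (sub2 R (proj2 b) (proj2 c)) = \<zero>"
      by (simp add: lb_energy_tuple_def rectangle_def)
    ultimately show "?g x \<in> ?Sig" using P xd by (simp add: A_def B_def)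
  qed
  then have "card (?g ` T4 l m) \<le> card ?Sig"
    using finP finA finB by (intro card_mono) (auto simp: finite_SigmaI)
  then show ?thesis using card_image[OF inj] cSig by simp
qed
end

theorem proposition1p5:
  shows "\<exists>c::real. c > 0 \<and>
    (\<forall>R :: nat ring. field R \<longrightarrow> finite (carrier R) \<longrightarrow> card (carrier R) mod 4 = 3 \<longrightarrow>
      (\<forall>l \<in> carrier R - {\<zero>\<^bsub>R\<^esub>}. \<forall>m \<in> carrier R - {\<zero>\<^bsub>R\<^esub>}.
        \<exists>X. X \<subseteq> parab R \<and>
            real (card X) \<ge> c * real (card (carrier R)) powr (5/3) \<and>
            \<not> (\<exists>a\<in>X. \<exists>b\<in>X. \<exists>c'\<in>X. \<exists>d\<in>X. lb_energy_tuple R l m a b c' d)))"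
proof -
  have main: "\<exists>X. X \<subseteq> parab R \<and>
            real (card X) \<ge> 1/16 * real (card (carrier R)) powr (5/3) \<and>
            \<not> (\<exists>a\<in>X. \<exists>b\<in>X. \<exists>c'\<in>X. \<exists>d\<in>X. lb_energy_tuple R l m a b c' d)"
    if fR: "field R" and fin: "finite (carrier R)" and q4: "card (carrier R) mod 4 = 3"
      and l: "l \<in> carrier R - {\<zero>\<^bsub>R\<^esub>}" and m: "m \<in> carrier R - {\<zero>\<^bsub>R\<^esub>}"
    for R :: "nat ring" and l m
  proof -
    interpret F: nfield R using fR by (simp add: nfield_def)
    define q where "q = card (carrier R)"
    have q3: "q \<ge> 3" using q4 unfolding q_def by (metis mod_less_eq_dividend)
    define y where "y = real q powr (5/3)"
    define k where "k = nat \<lfloor>y / 4\<rfloor>"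
    note rb = real_bound[OF q3, folded y_def, folded k_def]
    define V where "V = parab R"
    have finV: "finite V" unfolding V_def using F.finite_parab[OF fin] .
    have cV: "card V = q * q" unfolding V_def q_def using F.card_parab[OF fin] .
    define E where "E = (\<lambda>(a, b, c, d). {a, b, c, d}) ` F.T4 l m"
    have finT: "finite (F.T4 l m)"
      using F.T4_sub finV unfolding V_def by (meson finite_SigmaI finite_subset)
    have cE: "card E \<le> 16 * q ^ 3"
      using card_image_le[OF finT, of "\<lambda>(a, b, c, d). {a, b, c, d}"] F.card_T4[OF fin l m]
      unfolding E_def q_def by linarith
    have Eprop: "e \<subseteq> V \<and> card e = 4" if e: "e \<in> E" for e
    proof -
      obtain a b c d where t: "(a, b, c, d) \<in> F.T4 l m" and ee: "e = {a, b, c, d}"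
        using e unfolding E_def by auto
      then have n: "nontrivial_energy_tuple R a b c d" by (simp add: F.T4_def lb_energy_tuple_def)
      then show ?thesis using ee unfolding V_def nontrivial_energy_tuple_def by auto
    qed
    have kV: "k \<le> card V"
    proof -
      have "real k \<le> real (q * q)" using rb(1) by (simp add: power2_eq_square)
      then show ?thesis using cV by linarith
    qed
    obtain X where XV: "X \<subseteq> V" and cX: "real (card X) \<ge> real k - real (card E) * (real k / real (card V)) ^ 4"
      and noE: "\<forall>e\<in>E. \<not> e \<subseteq> X"
      using deletion[OF finV Eprop kV] by blast
    have qp: "real q > 0" using q3 by simp
    have "real (card E) * (real k / real (card V)) ^ 4 \<le> 16 * real q ^ 3 * (real k / real (card V)) ^ 4"
    proof -
      have "real (card E) \<le> 16 * real q ^ 3" using cE by (metis of_nat_le_iff of_nat_mult of_nat_numeral of_nat_power)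
      then show ?thesis by (intro mult_right_mono) auto
    qed
    also have "\<dots> = (64 * real k ^ 3) * real k / (4 * real q ^ 5)"
      using qp cV by (simp add: field_simps power_divide) (simp add: eval_nat_numeral mult_ac)
    also have "\<dots> \<le> real q ^ 5 * real k / (4 * real q ^ 5)"
      using rb(2) qp by (intro divide_right_mono mult_right_mono) auto
    also have "\<dots> = real k / 4" using qp by simp
    finally have "real (card E) * (real k / real (card V)) ^ 4 \<le> real k / 4" .
    then have "real (card X) \<ge> 3 / 4 * real k" using cX by linarith
    then have cX2: "real (card X) \<ge> 1/16 * real (card (carrier R)) powr (5/3)"
      using rb(3) unfolding y_def q_def by linarith
    have nobad: "\<not> (\<exists>a\<in>X. \<exists>b\<in>X. \<exists>c'\<in>X. \<exists>d\<in>X. lb_energy_tuple R l m a b c' d)"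
    proof
      assume "\<exists>a\<in>X. \<exists>b\<in>X. \<exists>c'\<in>X. \<exists>d\<in>X. lb_energy_tuple R l m a b c' d"
      then obtain a b c' d where X4: "a \<in> X" "b \<in> X" "c' \<in> X" "d \<in> X" and lb: "lb_energy_tuple R l m a b c' d"
        by blast
      have T: "(a, b, c', d) \<in> F.T4 l m" using lb by (simp add: F.T4_def)
      have "{a, b, c', d} \<in> E" unfolding E_def by (rule image_eqI[OF _ T]) simp
      then show False using noE X4 by auto
    qed
    show ?thesis using XV cX2 nobad unfolding V_def by blast
  qed
  show ?thesis
  proof (rule exI[of _ "1/16"], intro conjI allI impI ballI)
    show "(0::real) < 1/16" by simp
  next
    fix R :: "nat ring" and l m
    assume "field R" "finite (carrier R)" "card (carrier R) mod 4 = 3"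
      "l \<in> carrier R - {\<zero>\<^bsub>R\<^esub>}" "m \<in> carrier R - {\<zero>\<^bsub>R\<^esub>}"
    then show "\<exists>X. X \<subseteq> parab R \<and>
            real (card X) \<ge> 1/16 * real (card (carrier R)) powr (5/3) \<and>
            \<not> (\<exists>a\<in>X. \<exists>b\<in>X. \<exists>c'\<in>X. \<exists>d\<in>X. lb_energy_tuple R l m a b c' d)"
      by (rule main)
  qed
qed

end
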